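(* There is $c>0$ such that for every integer $n\ge2$, every integer $m$ with $|2m-n|\le1$, and all $z,w$ with $|z|,|w|\le cn$, $z\in L_n$ and $w+\frac mn z\in L_m$, $$\mathbb{P}\Big\{S_m=\frac mn z+w\,\Big|\,S_n=z\Big\}=2\sqrt{\frac{1}{2\pi(m-m^2/n)(1-(z/n)^2)}}\;\exp\Big\{-\frac{w^2}{2(m-m^2/n)(1-(z/n)^2)}+O\Big(\frac1n+\frac{w^4}{n^3}\Big)\Big\},$$ where the $O(\cdot)$ term is bounded in absolute value by a universal constant times $\frac1n+\frac{w^4}{n^3}$.
   Context: $S_n$ is simple random walk on $\mathbb{Z}$ started at $0$, with i.i.d. steps equal to $\pm1$ with probability $1/2$ each; $L_n=\{z\in\mathbb{Z}:\mathbb{P}\{S_n=z\}>0\}$. *)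

theory Defs
  imports "HOL-Probability.Probability"
begin

text \<open>Simple random walk on the integers: the first N steps are a uniformly random
  sequence in {-1,1}^N (equivalently i.i.d. fair +-1 steps).\<close>
definition srw_steps :: "nat \<Rightarrow> int list pmf" where
  "srw_steps N = pmf_of_set {xs. length xs = N \<and> set xs \<subseteq> {-1, 1}}"

definition walk_pos :: "nat \<Rightarrow> int list \<Rightarrow> int" where
  "walk_pos k xs = sum_list (take k xs)"

definition srw_prob :: "nat \<Rightarrow> int \<Rightarrow> real" where
  "srw_prob n z = measure_pmf.prob (srw_steps n) {xs. walk_pos n xs = z}"

definition L :: "nat \<Rightarrow> int set" where
  "L n = {z. srw_prob n z > 0}"

definition srw_cond_prob :: "nat \<Rightarrow> real \<Rightarrow> nat \<Rightarrow> int \<Rightarrow> real" where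
  "srw_cond_prob m a n z =
     measure_pmf.prob (srw_steps n) {xs. real_of_int (walk_pos m xs) = a \<and> walk_pos n xs = z}
     / measure_pmf.prob (srw_steps n) {xs. walk_pos n xs = z}"

end

theory Submission
  imports Defs
begin


lemma convex_zero_nonneg:
  fixes F F' F'' :: "real \<Rightarrow> real" and lo hi s :: real
  assumes "lo \<le> 0" "0 \<le> hi" "lo \<le> s" "s \<le> hi"
    and d1: "\<And>x. lo \<le> x \<Longrightarrow> x \<le> hi \<Longrightarrow> (F has_real_derivative F' x) (at x)"
    and d2: "\<And>x. lo \<le> x \<Longrightarrow> x \<le> hi \<Longrightarrow> (F' has_real_derivative F'' x) (at x)"
    and pos: "\<And>x. lo \<le> x \<Longrightarrow> x \<le> hi \<Longrightarrow> F'' x \<ge> 0"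
    and F0: "F 0 = 0" and F'0: "F' 0 = 0"
  shows "F s \<ge> 0"
proof (cases "s \<ge> 0")
  case True
  have "F 0 \<le> F s"
  proof (rule DERIV_nonneg_imp_nondecreasing[of 0 s F, OF True])
    fix x assume x: "0 \<le> x" "x \<le> s"
    have "F' 0 \<le> F' x"
      by (rule DERIV_nonneg_imp_nondecreasing[OF x(1)]) (use x assms in \<open>metis order.trans\<close>)
    then show "\<exists>y. (F has_real_derivative y) (at x) \<and> 0 \<le> y"
      using x assms by (intro exI[of _ "F' x"]) auto
  qed
  then show ?thesis using F0 by simp
next
  case False
  have "F s \<ge> F 0"
  proof (rule DERIV_nonpos_imp_nonincreasing[of s 0 F])
    show "s \<le> 0" using False by simp
    fix x assume x: "s \<le> x" "x \<le> 0"
    have "F' x \<le> F' 0"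
      by (rule DERIV_nonneg_imp_nondecreasing[OF x(2)]) (use x assms in \<open>metis order.trans\<close>)
    then show "\<exists>y. (F has_real_derivative y) (at x) \<and> y \<le> 0"
      using x assms by (intro exI[of _ "F' x"]) auto
  qed
  then show ?thesis using F0 by simp
qed

lemma h_bounds:
  fixes s :: real
  assumes "\<bar>s\<bar> \<le> 1/2"
  shows "0 \<le> (1+s)*ln(1+s) - s - s^2/2 + s^3/6"
    and "(1+s)*ln(1+s) - s - s^2/2 + s^3/6 \<le> s^4/6"
proof -
  have d1: "((\<lambda>x. (1+x)*ln(1+x) - x - x^2/2 + x^3/6) has_real_derivative (ln(1+x) - x + x^2/2)) (at x)"
    if "-1/2 \<le> x" "x \<le> 1/2" for x :: real
  proof -
    have "1 + x > 0" using that by simp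
    moreover have "(1+x)*(1+x) > 0" using \<open>1+x>0\<close> by simp
    then have "1 + (x*x + x*2) \<noteq> 0" by (simp add: algebra_simps)
    ultimately show ?thesis by (auto intro!: derivative_eq_intros simp: field_simps power2_eq_square)
  qed
  have d2: "((\<lambda>x. ln(1+x) - x + x^2/2) has_real_derivative (x^2/(1+x))) (at x)"
    if "-1/2 \<le> x" "x \<le> 1/2" for x :: real
  proof -
    have "1 + x > 0" using that by simp
    moreover have "(1+x)*(1+x) > 0" using \<open>1+x>0\<close> by simp
    then have "1 + (x*x + x*2) \<noteq> 0" by (simp add: algebra_simps)
    ultimately show ?thesis by (auto intro!: derivative_eq_intros simp: field_simps power2_eq_square)
  qed
  show "0 \<le> (1+s)*ln(1+s) - s - s^2/2 + s^3/6"
    by (rule convex_zero_nonneg[of "-1/2" "1/2" s _ _ "\<lambda>x. x^2/(1+x)", OF _ _ _ _ d1 d2])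
       (use assms in auto)
  have e1: "((\<lambda>x. x^4/6 - ((1+x)*ln(1+x) - x - x^2/2 + x^3/6)) has_real_derivative (2*x^3/3 - (ln(1+x) - x + x^2/2))) (at x)"
    if "-1/2 \<le> x" "x \<le> 1/2" for x :: real
  proof -
    have "1 + x > 0" using that by simp
    moreover have "(1+x)*(1+x) > 0" using \<open>1+x>0\<close> by simp
    then have "1 + (x*x + x*2) \<noteq> 0" by (simp add: algebra_simps)
    ultimately show ?thesis by (auto intro!: derivative_eq_intros simp: field_simps power2_eq_square)
  qed
  have e2: "((\<lambda>x. 2*x^3/3 - (ln(1+x) - x + x^2/2)) has_real_derivative (2*x^2 - x^2/(1+x))) (at x)"
    if "-1/2 \<le> x" "x \<le> 1/2" for x :: real
  proof -
    have "1 + x > 0" using that by simp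
    moreover have "(1+x)*(1+x) > 0" using \<open>1+x>0\<close> by simp
    then have "1 + (x*x + x*2) \<noteq> 0" by (simp add: algebra_simps)
    ultimately show ?thesis by (auto intro!: derivative_eq_intros simp: field_simps power2_eq_square)
  qed
  have pos: "0 \<le> 2*x^2 - x^2/(1+x)" if "-1/2 \<le> x" "x \<le> 1/2" for x :: real
  proof -
    have "x^2/(1+x) \<le> x^2/(1/2)" using that by (intro divide_left_mono) auto
    then show ?thesis by simp
  qed
  have "0 \<le> s^4/6 - ((1+s)*ln(1+s) - s - s^2/2 + s^3/6)"
    by (rule convex_zero_nonneg[of "-1/2" "1/2" s _ _ "\<lambda>x. 2*x^2 - x^2/(1+x)", OF _ _ _ _ e1 e2])
       (use assms pos in auto)
  then show "(1+s)*ln(1+s) - s - s^2/2 + s^3/6 \<le> s^4/6" by simp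
qed

lemma ln_lower3:
  fixes x :: real assumes "0 \<le> x"
  shows "x - x^2/2 \<le> ln (1+x)"
proof -
  have d1: "((\<lambda>x. ln(1+x) - x + x^2/2) has_real_derivative (1/(1+x) - 1 + x)) (at x)"
    if "0 \<le> x" for x :: real
    using that by (auto intro!: derivative_eq_intros simp: field_simps power2_eq_square)
  have d2: "((\<lambda>x. 1/(1+x) - 1 + x) has_real_derivative (1 - 1/(1+x)^2)) (at x)"
    if "0 \<le> x" for x :: real
    using that by (auto intro!: derivative_eq_intros simp: field_simps power2_eq_square)
  have pos: "0 \<le> 1 - 1/(1+x)^2" if "0 \<le> x" for x :: real
  proof -
    have "1 \<le> (1+x)^2" using that by (intro one_le_power) simp
    then have "1/(1+x)^2 \<le> 1" by (simp add: divide_le_eq)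
    then show ?thesis by simp
  qed
  have "0 \<le> ln(1+x) - x + x^2/2"
    by (rule convex_zero_nonneg[of 0 x x _ _ "\<lambda>x. 1 - 1/(1+x)^2", OF _ _ _ _ d1 d2])
       (use assms pos in auto)
  then show ?thesis by simp
qed

lemma ln_upper3:
  fixes x :: real assumes "0 \<le> x"
  shows "ln (1+x) \<le> x - x^2/2 + x^3/3"
proof -
  have d1: "((\<lambda>x. x - x^2/2 + x^3/3 - ln(1+x)) has_real_derivative (1 - x + x^2 - 1/(1+x))) (at x)"
    if "0 \<le> x" for x :: real
    using that by (auto intro!: derivative_eq_intros simp: field_simps power2_eq_square)
  have d2: "((\<lambda>x. 1 - x + x^2 - 1/(1+x)) has_real_derivative (-1 + 2*x + 1/(1+x)^2)) (at x)"
    if "0 \<le> x" for x :: real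
    using that by (auto intro!: derivative_eq_intros simp: field_simps power2_eq_square)
  have pos: "0 \<le> -1 + 2*x + 1/(1+x)^2" if "0 \<le> x" for x :: real
  proof -
    have "0 \<le> (-1 + 2*x)*(1+x)^2 + 1" using that
      by (simp add: power2_eq_square algebra_simps)
    moreover have "0 < (1+x)^2" using that by simp
    ultimately show ?thesis by (simp add: field_simps)
  qed
  have "0 \<le> x - x^2/2 + x^3/3 - ln(1+x)"
    by (rule convex_zero_nonneg[of 0 x x _ _ "\<lambda>x. -1 + 2*x + 1/(1+x)^2", OF _ _ _ _ d1 d2])
       (use assms pos in auto)
  then show ?thesis by simp
qed



definition dS :: "nat \<Rightarrow> real" where
  "dS N = ln (fact N) - (real N + 1/2) * ln (real N) + real N"

lemma dS_step:
  assumes "N \<ge> 1"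
  shows "\<bar>dS N - dS (Suc N)\<bar> \<le> 1 / (4 * real N ^ 2)"
proof -
  define x where "x = 1 / real N"
  have Npos: "real N > 0" using assms by simp
  have x0: "x \<ge> 0" unfolding x_def by simp
  have lnf: "ln (fact (Suc N)) = ln (real N + 1) + ln (fact N)"
    by (simp add: ln_mult add.commute)
  have lnd: "ln (real N + 1) = ln (real N) + ln (1 + x)"
  proof -
    have "real N + 1 = real N * (1 + x)" unfolding x_def using Npos by (simp add: field_simps)
    then show ?thesis using Npos x0 by (simp add: ln_mult)
  qed
  have eq: "dS N - dS (Suc N) = (real N + 1/2) * ln (1 + x) - 1"
    unfolding dS_def lnf using lnd by (simp add: algebra_simps)
  have l: "x - x^2/2 \<le> ln (1+x)" by (rule ln_lower3[OF x0])
  have u: "ln (1+x) \<le> x - x^2/2 + x^3/3" by (rule ln_upper3[OF x0])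
  have N12: "real N + 1/2 \<ge> 0" by simp
  have A: "(real N + 1/2) * (x - x^2/2) - 1 = - 1 / (4 * real N ^ 2)"
    unfolding x_def using Npos by (simp add: field_simps power2_eq_square)
  have B: "(real N + 1/2) * (x - x^2/2 + x^3/3) - 1 = 1/(12 * real N^2) + 1/(6 * real N^3)"
    unfolding x_def using Npos by (simp add: field_simps power2_eq_square power3_eq_cube)
  have C: "1/(12 * real N^2) + 1/(6 * real N^3) \<le> 1 / (4 * real N ^ 2)"
  proof -
    have "1/(6 * real N^3) \<le> 1/(6 * real N^2)"
      using assms by (intro divide_left_mono mult_left_mono power_increasing) auto
    then show ?thesis by simp
  qed
  have "(real N + 1/2) * ln (1+x) \<ge> (real N + 1/2) * (x - x^2/2)"
    using l N12 by (rule mult_left_mono)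
  moreover have "(real N + 1/2) * ln (1+x) \<le> (real N + 1/2) * (x - x^2/2 + x^3/3)"
    using u N12 by (rule mult_left_mono)
  ultimately show ?thesis unfolding abs_le_iff using eq A B C by linarith
qed

lemma dS_tele_step:
  assumes M1: "M \<ge> 1"
  shows "1 / (4 * real M ^ 2) \<le> 1/(2 * real M) - 1/(2 * real (Suc M))"
proof -
  have e: "1/(2 * real M) - 1/(2 * real (Suc M)) = 1 / (2 * real M * (real M + 1))"
    using M1 by (simp add: field_simps)
  have "2 * real M * (real M + 1) \<le> 4 * real M ^ 2"
  proof -
    have "real M + 1 \<le> 2 * real M" using M1 by simp
    then have "2 * real M * (real M + 1) \<le> 2 * real M * (2 * real M)"
      by (intro mult_left_mono) auto
    then show ?thesis by (simp add: power2_eq_square)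
  qed
  then have "1 / (4 * real M ^ 2) \<le> 1 / (2 * real M * (real M + 1))"
    using M1 by (intro divide_left_mono) auto
  then show ?thesis using e by simp
qed

lemma dS_tele:
  assumes "N \<ge> 1" "N \<le> M"
  shows "\<bar>dS N - dS M\<bar> \<le> 1/(2 * real N) - 1/(2 * real M)"
  using assms(2)
proof (induction M rule: dec_induct)
  case base
  then show ?case by simp
next
  case (step M)
  have M1: "M \<ge> 1" using step assms by simp
  have "\<bar>dS M - dS (Suc M)\<bar> \<le> 1 / (4 * real M ^ 2)" by (rule dS_step[OF M1])
  also have "\<dots> \<le> 1/(2 * real M) - 1/(2 * real (Suc M))" by (rule dS_tele_step[OF M1])
  finally show ?case using step.IH by linarith
qed

lemma dS_Cauchy: "Cauchy dS"
proof (rule metric_CauchyI)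
  fix e :: real assume e: "e > 0"
  obtain M :: nat where M: "M > 0" "inverse (real M) < e"
    using ex_inverse_of_nat_less[OF e] by blast
  show "\<exists>M. \<forall>m\<ge>M. \<forall>n\<ge>M. dist (dS m) (dS n) < e"
  proof (intro exI allI impI)
    fix m n assume mn: "M \<le> m" "M \<le> n"
    have h: "\<bar>dS a - dS b\<bar> \<le> 1 / real M" if "M \<le> a" "a \<le> b" for a b
    proof -
      have "\<bar>dS a - dS b\<bar> \<le> 1/(2 * real a) - 1/(2 * real b)"
        using dS_tele[of a b] that M by simp
      also have "\<dots> \<le> 1/(2*real a)" by simp
      also have "\<dots> \<le> 1 / real M" using that M by (intro divide_left_mono) auto
      finally show ?thesis .
    qed
    have "\<bar>dS m - dS n\<bar> \<le> 1 / real M"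
    proof (cases "m \<le> n")
      case True then show ?thesis using h[of m n] mn by simp
    next
      case False then show ?thesis using h[of n m] mn by (simp add: abs_minus_commute)
    qed
    then show "dist (dS m) (dS n) < e" using M by (simp add: dist_real_def inverse_eq_divide)
  qed
qed

definition DS :: real where "DS = lim dS"

lemma dS_lim: "dS \<longlonglongrightarrow> DS"
  unfolding DS_def using dS_Cauchy by (simp add: Cauchy_convergent_iff convergent_LIMSEQ_iff)

lemma dS_DS:
  assumes "N \<ge> 1"
  shows "\<bar>dS N - DS\<bar> \<le> 1/(2 * real N)"
proof -
  have "(\<lambda>M. \<bar>dS N - dS M\<bar>) \<longlonglongrightarrow> \<bar>dS N - DS\<bar>"
    by (intro tendsto_intros dS_lim)
  moreover have "\<forall>M\<ge>N. \<bar>dS N - dS M\<bar> \<le> 1/(2 * real N)"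
  proof (intro allI impI)
    fix M assume "N \<le> M"
    then have "\<bar>dS N - dS M\<bar> \<le> 1/(2 * real N) - 1/(2 * real M)" using dS_tele assms by blast
    also have "\<dots> \<le> 1/(2 * real N)" by simp
    finally show "\<bar>dS N - dS M\<bar> \<le> 1/(2 * real N)" .
  qed
  ultimately show ?thesis by (intro LIMSEQ_le_const2) auto
qed



lemma wal_alg:
  fixes A F G x :: real
  assumes "x \<ge> 0" "G > 0" "F > 0"
  shows "A * F^4 / (G^2 * (2*x+1)) * ((4*(x+1)^2) / ((2*x+1)*(2*x+3)))
       = (16*A) * ((x+1)*F)^4 / (((2*x+2)*(2*x+1)*G)^2 * (2*(x+1)+1))"
proof -
  have nz: "2*x+1 \<noteq> 0" "2*x+3 \<noteq> 0" "x+1 \<noteq> 0" "2*x+2 \<noteq> 0" "G \<noteq> 0" using assms by auto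
  show ?thesis using nz by (simp add: divide_simps) algebra
qed

lemma ln_W_alg:
  fixes x F G d1 d2 :: real and n :: nat
  assumes x: "x = real n" "n \<ge> 1" and F: "F > 0" "G > 0"
    and lF: "ln F = d1 + (x + 1/2) * ln x - x"
    and lG: "ln G = d2 + (2*x + 1/2) * ln (2*x) - 2*x"
  shows "ln (2^(4*n) * F^4 / (G^2 * (2*x+1))) = 4 * d1 - 2 * d2 + ln (1/(2 + 1/x)) - ln 2"
proof -
  have xp: "x > 0" using x by simp
  have "ln (2^(4*n) * F^4 / (G^2 * (2*x+1))) = ln (2^(4*n)) + ln (F^4) - (ln (G^2) + ln (2*x+1))"
    using xp F by (simp add: ln_mult ln_div)
  also have "ln (2^(4*n)) = 4 * x * ln 2" using x by (simp add: ln_realpow)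
  also have "ln (F^4) = 4 * ln F" using F by (simp add: ln_realpow)
  also have "ln (G^2) = 2 * ln G" using F by (simp add: ln_realpow)
  also have "ln (2*x+1) = ln x - ln (1/(2 + 1/x))"
  proof -
    have "1/(2 + 1/x) = x / (2*x+1)" using xp by (simp add: field_simps)
    then show ?thesis using xp by (simp add: ln_div)
  qed
  finally have e: "ln (2^(4*n) * F^4 / (G^2 * (2*x+1))) = 4 * x * ln 2 + 4 * ln F - (2 * ln G + (ln x - ln (1/(2 + 1/x))))" .
  have l2: "ln (2*x) = ln 2 + ln x" using xp by (simp add: ln_mult)
  show ?thesis unfolding e lF lG l2 by (simp add: algebra_simps)
qed

lemma wallis_prod:
  "(\<Prod>k=1..n. (4*real k^2) / (4*real k^2 - 1)) =
     2^(4*n) * (fact n)^4 / ((fact (2*n))^2 * (2*real n+1))"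
proof (induction n)
  case 0
  then show ?case by simp
next
  case (Suc n)
  have f2: "(fact (2 * Suc n) :: real) = (2*real n+2)*(2*real n+1) * fact (2*n)"
  proof -
    have "2 * Suc n = Suc (Suc (2*n))" by simp
    then show ?thesis by (simp add: algebra_simps)
  qed
  have fs: "(fact (Suc n) :: real) = (real n + 1) * fact n" by simp
  have pos: "(fact (2*n) :: real) > 0" "(fact n :: real) > 0" by auto
  have "(\<Prod>k=1..Suc n. (4*real k^2) / (4*real k^2 - 1)) =
        (\<Prod>k=1..n. (4*real k^2) / (4*real k^2 - 1)) * ((4*real (Suc n)^2) / (4*real (Suc n)^2 - 1))"
    by (simp add: prod.nat_ivl_Suc')
  also have "\<dots> = 2^(4*n) * (fact n)^4 / ((fact (2*n))^2 * (2*real n+1)) *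
       ((4*(real n+1)^2) / ((2*real n+1)*(2*real n+3)))"
  proof -
    have "4*real (Suc n)^2 - 1 = (2*real n+1)*(2*real n+3)" by (simp add: algebra_simps power2_eq_square)
    moreover have "4*real (Suc n)^2 = 4*(real n+1)^2" by simp
    ultimately show ?thesis unfolding Suc.IH by simp
  qed
  also have "\<dots> = 2^(4*Suc n) * (fact (Suc n))^4 / ((fact (2*Suc n))^2 * (2*real (Suc n)+1))"
  proof -
    have p16: "(2::real)^(4*Suc n) = 16 * 2^(4*n)" by (simp add: power_add)
    have s1: "2*real (Suc n)+1 = 2*(real n+1)+1" by simp
    show ?thesis unfolding f2 fs p16 s1
      by (rule wal_alg) (use pos in auto)
  qed
  finally show ?case .
qed

lemma ln_fact_dS: "N \<ge> 1 \<Longrightarrow> ln (fact N) = dS N + (real N + 1/2) * ln (real N) - real N"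
  unfolding dS_def by simp

lemma DS_value: "DS = ln (2*pi) / 2"
proof -
  define W where "W n = (\<Prod>k=1..n. (4*real k^2) / (4*real k^2 - 1))" for n
  have lim1: "(\<lambda>n. ln (W n)) \<longlonglongrightarrow> ln (pi/2)"
    unfolding W_def by (rule tendsto_ln[OF wallis]) simp
  have eq: "ln (W n) = 4 * dS n - 2 * dS (2*n) + ln (1/(2 + 1/real n)) - ln 2" if n1: "n \<ge> 1" for n
  proof -
    have "W n = 2^(4*n) * (fact n)^4 / ((fact (2*n))^2 * (2*real n+1))"
      unfolding W_def by (rule wallis_prod)
    moreover have "ln (fact n) = dS n + (real n + 1/2) * ln (real n) - real n"
      using n1 by (rule ln_fact_dS)
    moreover have "ln (fact (2*n)) = dS (2*n) + (2*real n + 1/2) * ln (2*real n) - 2*real n"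
      using ln_fact_dS[of "2*n"] n1 by simp
    ultimately show ?thesis
      using ln_W_alg[of "real n" n "fact n" "fact (2*n)" "dS n" "dS (2*n)"] n1 by simp
  qed
  have lim2: "(\<lambda>n. 4 * dS n - 2 * dS (2*n) + ln (1/(2 + 1/real n)) - ln 2)
       \<longlonglongrightarrow> 4 * DS - 2 * DS + ln (1/(2 + 0)) - ln 2"
  proof -
    have a: "(\<lambda>n. dS (2*n)) \<longlonglongrightarrow> DS"
      using LIMSEQ_subseq_LIMSEQ[OF dS_lim, of "\<lambda>n. 2*n"] by (simp add: strict_mono_def comp_def)
    have b: "(\<lambda>n. 1/(2 + 1/real n)) \<longlonglongrightarrow> 1/(2+0)"
      by (intro tendsto_divide tendsto_add tendsto_const lim_inverse_n') simp
    have c: "(\<lambda>n. ln (1/(2 + 1/real n))) \<longlonglongrightarrow> ln (1/(2+0))"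
      by (rule tendsto_ln[OF b]) simp
    show ?thesis
      by (intro tendsto_diff tendsto_add tendsto_mult_left a dS_lim c tendsto_const)
  qed
  have "eventually (\<lambda>n. ln (W n) = 4 * dS n - 2 * dS (2*n) + ln (1/(2 + 1/real n)) - ln 2) sequentially"
    by (rule eventually_sequentiallyI[of 1]) (rule eq)
  then have lim3: "(\<lambda>n. 4 * dS n - 2 * dS (2*n) + ln (1/(2 + 1/real n)) - ln 2) \<longlonglongrightarrow> ln (pi/2)"
    by (rule Lim_transform_eventually[OF lim1])
  have "ln (pi/2) = 4 * DS - 2 * DS + ln (1/(2 + 0)) - ln 2"
    using LIMSEQ_unique[OF lim3 lim2] .
  then have "ln pi - ln 2 = 2 * DS - 2 * ln 2" by (simp add: ln_div)
  then show ?thesis by (simp add: ln_mult)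
qed



definition FS :: "real \<Rightarrow> real" where "FS N = (N + 1/2) * ln N - N"

lemma recip_le: fixes x c :: real shows "0 < c \<Longrightarrow> c \<le> x \<Longrightarrow> 1/x \<le> 1/c"
  by (simp add: frac_le)

lemma recip_pow_le: fixes x c :: real shows "0 < c \<Longrightarrow> c \<le> x \<Longrightarrow> 1/x^k \<le> 1/c^k"
  by (intro recip_le zero_less_power power_mono) auto

lemma prod_ge16:
  fixes n m P :: real
  assumes "n > 0" "m \<ge> n/4" "P \<ge> n/4"
  shows "m*P/n \<ge> n/16"
proof -
  have "(n/4)*(n/4) \<le> m*P" using assms by (intro mult_mono) auto
  then have "(n/4)*(n/4)/n \<le> m*P/n" using assms by (intro divide_right_mono) auto
  moreover have "(n/4)*(n/4)/n = n/16" using assms by (simp add: field_simps)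
  ultimately show ?thesis by linarith
qed

lemma Xh_bound:
  fixes X n w s :: real
  assumes n: "n > 0" and X: "X \<ge> n/16" and s4: "s^4 = w^4/(16*X^4)" and s: "\<bar>s\<bar> \<le> 1/2"
  shows "\<bar>X * ((1+s)*ln(1+s) - s - s^2/2 + s^3/6)\<bar> \<le> 43 * (w^4/n^3)"
proof -
  have Xp: "X > 0" using n X by (smt (verit) divide_pos_pos)
  have h: "0 \<le> (1+s)*ln(1+s) - s - s^2/2 + s^3/6" "(1+s)*ln(1+s) - s - s^2/2 + s^3/6 \<le> s^4/6"
    using h_bounds[OF s] by auto
  have "\<bar>X * ((1+s)*ln(1+s) - s - s^2/2 + s^3/6)\<bar> \<le> X * (s^4/6)"
    using h Xp by (simp add: abs_mult mult_left_mono)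
  also have "X * (s^4/6) = w^4/96 * (1/X^3)" using Xp unfolding s4 by (simp add: field_simps power_def)
  also have "\<dots> \<le> w^4/96 * (1/(n/16)^3)"
    using recip_pow_le[of "n/16" X 3] n X by (intro mult_left_mono) auto
  also have "\<dots> = (4096/96) * (w^4/n^3)" by (simp add: field_simps power3_eq_cube)
  also have "\<dots> \<le> 43 * (w^4/n^3)" using n by (intro mult_right_mono) auto
  finally show ?thesis .
qed

lemma s2_bound:
  fixes X n w s :: real
  assumes n: "n > 0" and X: "X \<ge> n/16" and s2: "s^2 = w^2/(4*X^2)"
  shows "s^2 \<le> 64 * (w^2/n^2)"
proof -
  have Xp: "X > 0" using n X by (smt (verit) divide_pos_pos)
  have "s^2 = w^2/4 * (1/X^2)" using s2 by simp
  also have "\<dots> \<le> w^2/4 * (1/(n/16)^2)"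
    using recip_pow_le[of "n/16" X 2] n X by (intro mult_left_mono) auto
  also have "\<dots> = 64 * (w^2/n^2)" by (simp add: field_simps power2_eq_square)
  finally show ?thesis .
qed

lemma bound_m:
  fixes n m :: real
  assumes n: "n > 0" and m1: "m \<ge> n/4" and m2: "n - m \<ge> n/4" and mn: "\<bar>n - 2*m\<bar> \<le> 1"
  shows "\<bar>1/m^2 - 1/(n-m)^2\<bar> \<le> 256/n^3" and "\<bar>1/m - 1/(n-m)\<bar> \<le> 16/n^2"
proof -
  have mp: "m > 0" "n - m > 0" using n m1 m2 by linarith+
  have e0: "1/m^2 - 1/k^2 = (k+m)*(k-m) * (1/m^2) * (1/k^2)" if "m \<noteq> 0" "k \<noteq> 0" for k :: real
    using that by (simp add: field_simps power2_eq_square)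
  have e: "1/m^2 - 1/(n-m)^2 = n*(n-2*m) * (1/m^2) * (1/(n-m)^2)"
    using e0[of "n-m"] mp by simp
  have "\<bar>1/m^2 - 1/(n-m)^2\<bar> = n*\<bar>n-2*m\<bar> * (1/m^2) * (1/(n-m)^2)"
    unfolding e using n by (simp add: abs_mult)
  also have "\<dots> \<le> n*1 * (1/(n/4)^2) * (1/(n/4)^2)"
    using n mn recip_pow_le[of "n/4" m 2] recip_pow_le[of "n/4" "n-m" 2] m1 m2
    by (intro mult_mono) auto
  also have "\<dots> = 256/n^3" using n by (simp add: field_simps power2_eq_square power3_eq_cube)
  finally show "\<bar>1/m^2 - 1/(n-m)^2\<bar> \<le> 256/n^3" .
  have e2: "1/m - 1/(n-m) = (n-2*m) * (1/m) * (1/(n-m))"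
    using mp by (simp add: field_simps)
  have "\<bar>1/m - 1/(n-m)\<bar> = \<bar>n-2*m\<bar> * (1/m) * (1/(n-m))"
    unfolding e2 using mp by (simp add: abs_mult)
  also have "\<dots> \<le> 1 * (1/(n/4)) * (1/(n/4))"
    using n mn recip_le[of "n/4" m] recip_le[of "n/4" "n-m"] m1 m2
    by (intro mult_mono) auto
  also have "\<dots> = 16/n^2" using n by (simp add: field_simps power2_eq_square)
  finally show "\<bar>1/m - 1/(n-m)\<bar> \<le> 16/n^2" .
qed

lemma bound_P:
  fixes n P Q :: real
  assumes n: "n > 0" and P: "P \<ge> n/4" and Q: "Q \<ge> n/4"
  shows "\<bar>1/P^2 - 1/Q^2\<bar> \<le> 32/n^2" and "\<bar>1/P - 1/Q\<bar> \<le> 8/n"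
proof -
  have a: "1/P^2 \<le> 16/n^2" "1/Q^2 \<le> 16/n^2"
    using recip_pow_le[of "n/4" P 2] recip_pow_le[of "n/4" Q 2] n P Q
    by (simp_all add: field_simps power2_eq_square)
  have b: "1/P^2 \<ge> 0" "1/Q^2 \<ge> 0" by auto
  show "\<bar>1/P^2 - 1/Q^2\<bar> \<le> 32/n^2" using a b by linarith
  have c: "1/P \<le> 4/n" "1/Q \<le> 4/n"
    using recip_le[of "n/4" P] recip_le[of "n/4" Q] n P Q by simp_all
  have d: "1/P \<ge> 0" "1/Q \<ge> 0" using n P Q by auto
  show "\<bar>1/P - 1/Q\<bar> \<le> 8/n" using c d by linarith
qed

lemma I3gen:
  fixes m k P Q n w :: real
  assumes "m > 0" "k > 0" "P > 0" "Q > 0" "n = m + k" "P + Q = n"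
  shows "w^2/(2*(4*m*k*P*Q/n^3)) =
    ((m*P/n)*(w/(2*(m*P/n)))^2 + (m*Q/n)*(-w/(2*(m*Q/n)))^2 + (k*P/n)*(-w/(2*(k*P/n)))^2 + (k*Q/n)*(w/(2*(k*Q/n)))^2)/2"
proof -
  have n: "n > 0" using assms by simp
  have "(m*P/n)*(w/(2*(m*P/n)))^2 = w^2*n/(4*m*P)" using assms(1-4) n by (simp add: field_simps power2_eq_square)
  moreover have "(m*Q/n)*(-w/(2*(m*Q/n)))^2 = w^2*n/(4*m*Q)" using assms(1-4) n by (simp add: field_simps power2_eq_square)
  moreover have "(k*P/n)*(-w/(2*(k*P/n)))^2 = w^2*n/(4*k*P)" using assms(1-4) n by (simp add: field_simps power2_eq_square)
  moreover have "(k*Q/n)*(w/(2*(k*Q/n)))^2 = w^2*n/(4*k*Q)" using assms(1-4) n by (simp add: field_simps power2_eq_square)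
  moreover have "w^2*n/(4*m*P) + w^2*n/(4*m*Q) + w^2*n/(4*k*P) + w^2*n/(4*k*Q) = (w^2*n/4) * ((m+k)/(m*k)) * ((P+Q)/(P*Q))"
    using assms(1-4) by (simp add: field_simps)
  moreover have "w^2/(2*(4*m*k*P*Q/n^3)) = (w^2*n/4) * (n/(m*k)) * (n/(P*Q)) / 2"
    using assms(1-4) n by (simp add: field_simps power3_eq_cube)
  moreover have "m + k = n" "P + Q = n" using assms by auto
  ultimately show ?thesis by simp
qed

lemma I5gen:
  fixes m k P Q n w :: real
  assumes "m > 0" "k > 0" "P > 0" "Q > 0" "n > 0"
  shows "(m*P/n)*(w/(2*(m*P/n)))^3 + (m*Q/n)*(-w/(2*(m*Q/n)))^3 + (k*P/n)*(-w/(2*(k*P/n)))^3 + (k*Q/n)*(w/(2*(k*Q/n)))^3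
     = (w^3/8) * n^2 * (1/m^2 - 1/k^2) * (1/P^2 - 1/Q^2)"
  using assms by (simp add: field_simps power2_eq_square power3_eq_cube)

lemma I6gen:
  fixes m k P Q n w :: real
  assumes "m > 0" "k > 0" "P > 0" "Q > 0" "n > 0"
  shows "w/(2*(m*P/n)) + (-w/(2*(m*Q/n))) + (-w/(2*(k*P/n))) + w/(2*(k*Q/n))
     = (w/2) * n * (1/m - 1/k) * (1/P - 1/Q)"
  using assms by (simp add: field_simps)

lemma I1gen:
  fixes n m P Q a1 a2 a3 a4 lm lnm ln' lP lQ l1 l2 l3 l4 L1 L2 L3 L4 :: real
  assumes "a2 = m - a1" "a3 = P - a1" "a4 = n - m - P + a1" "Q = n - P"
    and "L1 = lm + lP - ln' + l1" "L2 = lm + lQ - ln' + l2" "L3 = lnm + lP - ln' + l3" "L4 = lnm + lQ - ln' + l4"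
  shows "((m+1/2)*lm - m) + ((n-m+1/2)*lnm - (n-m)) - ((n+1/2)*ln' - n) + ((P+1/2)*lP - P) + ((Q+1/2)*lQ - Q)
     - ((a1+1/2)*L1 - a1) - ((a2+1/2)*L2 - a2) - ((a3+1/2)*L3 - a3) - ((a4+1/2)*L4 - a4)
   = - ((a1+1/2)*l1 + (a2+1/2)*l2 + (a3+1/2)*l3 + (a4+1/2)*l4) + (3*ln' - lm - lnm - lP - lQ)/2"
  unfolding assms apply (simp add: algebra_simps) by (simp add: field_simps)

lemma s_abs:
  fixes X n w :: real
  assumes "n > 0" "X \<ge> n/16" "\<bar>w\<bar> \<le> n/100"
  shows "\<bar>w/(2*X)\<bar> \<le> 8/100" "\<bar>-w/(2*X)\<bar> \<le> 8/100"
proof -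
  have Xp: "X > 0" using assms by (smt (verit) divide_pos_pos)
  have "\<bar>w/(2*X)\<bar> = \<bar>w\<bar> * (1/(2*X))" using Xp by (simp add: abs_mult)
  also have "\<dots> \<le> (n/100) * (1/(2*(n/16)))"
    using assms Xp by (intro mult_mono recip_le) auto
  also have "\<dots> = 8/100" using assms by simp
  finally show "\<bar>w/(2*X)\<bar> \<le> 8/100" .
  then show "\<bar>-w/(2*X)\<bar> \<le> 8/100" by simp
qed

lemma a_ge:
  fixes X n s :: real
  assumes "n > 0" "X \<ge> n/16" "\<bar>s\<bar> \<le> 8/100"
  shows "X*(1+s) \<ge> n/32"
proof -
  have Xp: "X > 0" using assms by (smt (verit) divide_pos_pos)
  have "(n/16)*(92/100) \<le> X*(1+s)" using assms Xp by (intro mult_mono) auto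
  then show ?thesis using assms by simp
qed

lemma w3_le: fixes w n :: real assumes "n \<ge> 1" shows "\<bar>w\<bar>^3/n^3 \<le> 1/n + w^4/n^3"
proof -
  have "\<bar>w\<bar>^3 \<le> 1 + w^4"
  proof (cases "\<bar>w\<bar> \<le> 1")
    case True
    then have "\<bar>w\<bar>^3 \<le> 1" by (simp add: power_le_one)
    moreover have "0 \<le> w^4" by simp
    ultimately show ?thesis by linarith
  next
    case False
    then have "\<bar>w\<bar>^3 \<le> \<bar>w\<bar>^4" by (intro power_increasing) auto
    then show ?thesis by simp
  qed
  then have "\<bar>w\<bar>^3/n^3 \<le> (1 + w^4)/n^3" using assms by (intro divide_right_mono) auto
  also have "\<dots> = 1/n^3 + w^4/n^3" by (simp add: add_divide_distrib)
  also have "1/n^3 \<le> 1/n"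
  proof -
    have "n^1 \<le> n^3" using assms by (intro power_increasing) auto
    then show ?thesis using assms by (intro recip_le) auto
  qed
  finally show ?thesis by simp
qed

lemma w2_le: fixes w n :: real assumes "n > 0" shows "w^2/n^2 \<le> 1/n + w^4/n^3"
proof -
  have "0 \<le> (n - w^2)^2" by simp
  then have "2*n*w^2 \<le> n^2 + w^4" by (simp add: power2_eq_square algebra_simps power4_eq_xxxx)
  moreover have "0 \<le> n*w^2" using assms by simp
  ultimately have "n*w^2 \<le> n^2 + w^4" by linarith
  then have "(n*w^2)/n^3 \<le> (n^2 + w^4)/n^3" using assms by (intro divide_right_mono) auto
  moreover have "(n*w^2)/n^3 = w^2/n^2" using assms by (simp add: field_simps power2_eq_square power3_eq_cube)
  moreover have "(n^2 + w^4)/n^3 = 1/n + w^4/n^3" using assms by (simp add: field_simps power2_eq_square power3_eq_cube)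
  ultimately show ?thesis by simp
qed

lemma final_lin:
  fixes A1 A2 A3 A4 C S L1 L2 L3 L4 W4 W3 W2 N :: real
  assumes "\<bar>A1\<bar> \<le> 43 * W4" "\<bar>A2\<bar> \<le> 43 * W4" "\<bar>A3\<bar> \<le> 43 * W4" "\<bar>A4\<bar> \<le> 43 * W4"
    "\<bar>C\<bar> \<le> 1024 * W3" "\<bar>S\<bar> \<le> N"
    "\<bar>L1\<bar> \<le> 128 * W2" "\<bar>L2\<bar> \<le> 128 * W2" "\<bar>L3\<bar> \<le> 128 * W2" "\<bar>L4\<bar> \<le> 128 * W2"
    "W3 \<le> N + W4" "W2 \<le> N + W4" "0 \<le> W4" "0 \<le> N"
  shows "\<bar>- (A1 + A2 + A3 + A4) - 0 + C/6 - S/2 - (L1 + L2 + L3 + L4)/2\<bar> \<le> 600 * (N + W4)"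
  using assms unfolding abs_le_iff by argo

lemma analytic:
  fixes n m P Q w :: real
  assumes n2: "n \<ge> 2" and mn: "\<bar>n - 2*m\<bar> \<le> 1" and PQ: "P + Q = n" and Pb: "P \<ge> n/4" and Qb: "Q \<ge> n/4"
    and wb: "\<bar>w\<bar> \<le> n/100"
  shows "m*P/n + w/2 \<ge> n/32" "m*Q/n - w/2 \<ge> n/32" "(n-m)*P/n - w/2 \<ge> n/32" "(n-m)*Q/n + w/2 \<ge> n/32"
    "\<bar>FS m + FS (n-m) - FS n + FS P + FS Q - FS (m*P/n + w/2) - FS (m*Q/n - w/2)
        - FS ((n-m)*P/n - w/2) - FS ((n-m)*Q/n + w/2) - ln (2*pi)/2
        - (ln (2 * sqrt (1/(2*pi*((m - m^2/n) * (1 - ((P - Q)/n)^2))))) - w^2/(2*((m - m^2/n) * (1 - ((P - Q)/n)^2))))\<bar>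
      \<le> 600 * (1/n + w^4/n^3)"
proof -
  have n: "n > 0" using n2 by simp
  have m1: "m \<ge> n/4" and m2: "n - m \<ge> n/4" using mn n2 by (auto simp: abs_le_iff)
  have mp: "m > 0" "n - m > 0" and PQp: "P > 0" "Q > 0" using n m1 m2 Pb Qb by linarith+
  define X1 where "X1 = m*P/n"
  define X2 where "X2 = m*Q/n"
  define X3 where "X3 = (n-m)*P/n"
  define X4 where "X4 = (n-m)*Q/n"
  have Xb: "X1 \<ge> n/16" "X2 \<ge> n/16" "X3 \<ge> n/16" "X4 \<ge> n/16"
    unfolding X1_def X2_def X3_def X4_def
    using prod_ge16[OF n m1 Pb] prod_ge16[OF n m1 Qb] prod_ge16[OF n m2 Pb] prod_ge16[OF n m2 Qb] by auto
  have Xp: "X1 > 0" "X2 > 0" "X3 > 0" "X4 > 0" using Xb n by (smt (verit) divide_pos_pos)+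
  define s1 where "s1 = w/(2*X1)"
  define s2 where "s2 = -w/(2*X2)"
  define s3 where "s3 = -w/(2*X3)"
  define s4 where "s4 = w/(2*X4)"
  have sb: "\<bar>s1\<bar> \<le> 8/100" "\<bar>s2\<bar> \<le> 8/100" "\<bar>s3\<bar> \<le> 8/100" "\<bar>s4\<bar> \<le> 8/100"
    unfolding s1_def s2_def s3_def s4_def using s_abs[OF n _ wb] Xb by auto
  have aeq: "m*P/n + w/2 = X1*(1+s1)" "m*Q/n - w/2 = X2*(1+s2)"
     "(n-m)*P/n - w/2 = X3*(1+s3)" "(n-m)*Q/n + w/2 = X4*(1+s4)"
  proof -
    have g1: "X + w/2 = X*(1 + w/(2*X))" if "X > 0" for X using that by (simp add: field_simps)
    have g2: "X - w/2 = X*(1 + -w/(2*X))" if "X > 0" for X using that by (simp add: field_simps)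
    show "m*P/n + w/2 = X1*(1+s1)" "m*Q/n - w/2 = X2*(1+s2)"
     "(n-m)*P/n - w/2 = X3*(1+s3)" "(n-m)*Q/n + w/2 = X4*(1+s4)"
      unfolding X1_def[symmetric] X2_def[symmetric] X3_def[symmetric] X4_def[symmetric]
        s1_def s2_def s3_def s4_def using g1 g2 Xp by auto
  qed
  have ab: "X1*(1+s1) \<ge> n/32" "X2*(1+s2) \<ge> n/32" "X3*(1+s3) \<ge> n/32" "X4*(1+s4) \<ge> n/32"
    using a_ge[OF n] Xb sb by auto
  then show "m*P/n + w/2 \<ge> n/32" "m*Q/n - w/2 \<ge> n/32" "(n-m)*P/n - w/2 \<ge> n/32" "(n-m)*Q/n + w/2 \<ge> n/32"
    unfolding aeq by auto
  have s1p: "1 + s1 > 0" "1 + s2 > 0" "1 + s3 > 0" "1 + s4 > 0" using sb by (auto simp: abs_le_iff)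
  define l1 where "l1 = ln (1+s1)"
  define l2 where "l2 = ln (1+s2)"
  define l3 where "l3 = ln (1+s3)"
  define l4 where "l4 = ln (1+s4)"
  have lnX: "ln X1 = ln m + ln P - ln n" "ln X2 = ln m + ln Q - ln n"
      "ln X3 = ln (n-m) + ln P - ln n" "ln X4 = ln (n-m) + ln Q - ln n"
    unfolding X1_def X2_def X3_def X4_def using mp PQp n by (simp_all add: ln_mult ln_div)
  have lna: "ln (X1*(1+s1)) = ln m + ln P - ln n + l1" "ln (X2*(1+s2)) = ln m + ln Q - ln n + l2"
      "ln (X3*(1+s3)) = ln (n-m) + ln P - ln n + l3" "ln (X4*(1+s4)) = ln (n-m) + ln Q - ln n + l4"
    unfolding l1_def l2_def l3_def l4_def using Xp s1p lnX by (simp_all add: ln_mult)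
  have arel: "X2*(1+s2) = m - X1*(1+s1)" "X3*(1+s3) = P - X1*(1+s1)"
      "X4*(1+s4) = n - m - P + X1*(1+s1)" "Q = n - P"
  proof -
    have n': "P + Q > 0" using PQ n by simp
    show "X2*(1+s2) = m - X1*(1+s1)" "X3*(1+s3) = P - X1*(1+s1)"
      "X4*(1+s4) = n - m - P + X1*(1+s1)" "Q = n - P"
      unfolding aeq[symmetric] PQ[symmetric] using n' by (simp_all add: field_simps)
  qed
  have I1: "FS m + FS (n-m) - FS n + FS P + FS Q - FS (X1*(1+s1)) - FS (X2*(1+s2))
        - FS (X3*(1+s3)) - FS (X4*(1+s4))
      = - ((X1*(1+s1)+1/2)*l1 + (X2*(1+s2)+1/2)*l2 + (X3*(1+s3)+1/2)*l3 + (X4*(1+s4)+1/2)*l4)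
        + (3*ln n - ln m - ln (n-m) - ln P - ln Q)/2"
    unfolding FS_def by (rule I1gen[OF arel lna])
  define \<sigma> where "\<sigma> = (m - m^2/n) * (1 - ((P - Q)/n)^2)"
  have sig: "\<sigma> = 4*m*(n-m)*P*Q/n^3"
  proof -
    have nPQ: "n = P + Q" using PQ by simp
    have d: "(P+Q)^2 \<noteq> 0" using n nPQ by simp
    have "1 - ((P - Q)/(P+Q))^2 = ((P+Q)^2 - (P-Q)^2)/(P+Q)^2"
      using d by (simp only: power_divide) (simp add: diff_divide_distrib)
    also have "(P+Q)^2 - (P-Q)^2 = 4*P*Q" by (simp add: power2_eq_square algebra_simps)
    finally have A: "1 - ((P - Q)/n)^2 = 4*P*Q/n^2" unfolding nPQ .
    have B: "m - m^2/n = m*(n-m)/n" using n by (simp add: field_simps power2_eq_square)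
    show ?thesis unfolding \<sigma>_def A B using n by (simp add: field_simps power2_eq_square power3_eq_cube)
  qed
  have sigp: "\<sigma> > 0" unfolding sig using mp PQp n by simp
  have I2: "ln (2 * sqrt (1/(2*pi*\<sigma>))) = (3*ln n - ln m - ln (n-m) - ln P - ln Q)/2 - ln (2*pi)/2"
  proof -
    have "ln (2 * sqrt (1/(2*pi*\<sigma>))) = ln 2 + ln (1/(2*pi*\<sigma>))/2"
      using sigp by (simp add: ln_mult ln_sqrt)
    also have "ln (1/(2*pi*\<sigma>)) = - ln (2*pi) - ln \<sigma>" using sigp by (simp add: ln_div ln_mult)
    also have "ln \<sigma> = ln 4 + ln m + ln (n-m) + ln P + ln Q - 3 * ln n"
      unfolding sig using mp PQp n by (simp add: ln_mult ln_div ln_realpow)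
    also have "ln (4::real) = 2 * ln 2"
      using ln_realpow[of 2 2] by simp
    finally show ?thesis by (simp add: field_simps)
  qed
  have I3: "w^2/(2*\<sigma>) = (X1* s1^2 + X2* s2^2 + X3* s3^2 + X4* s4^2)/2"
    unfolding sig X1_def X2_def X3_def X4_def s1_def s2_def s3_def s4_def
    by (rule I3gen) (use mp PQp PQ in auto)
  have I5: "X1* s1^3 + X2* s2^3 + X3* s3^3 + X4* s4^3 = (w^3/8) * n^2 * (1/m^2 - 1/(n-m)^2) * (1/P^2 - 1/Q^2)"
    unfolding X1_def X2_def X3_def X4_def s1_def s2_def s3_def s4_def
    by (rule I5gen) (use mp PQp n in auto)
  have I6: "s1 + s2 + s3 + s4 = (w/2) * n * (1/m - 1/(n-m)) * (1/P - 1/Q)"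
    unfolding X1_def X2_def X3_def X4_def s1_def s2_def s3_def s4_def
    by (rule I6gen) (use mp PQp n in auto)
  have I4: "X1* s1 + X2* s2 + X3* s3 + X4* s4 = 0"
    unfolding s1_def s2_def s3_def s4_def using Xp by simp
  define h where "h s = (1+s)*ln(1+s) - s - s^2/2 + s^3/6" for s :: real
  have dec: "(X*(1+s)+1/2)*ln(1+s) = X * h s + X* s + X* s^2/2 - X* s^3/6 + 1/2*ln(1+s)" for X s :: real
    unfolding h_def by (simp add: algebra_simps)
  have E0: "FS m + FS (n-m) - FS n + FS P + FS Q - FS (X1*(1+s1)) - FS (X2*(1+s2))
        - FS (X3*(1+s3)) - FS (X4*(1+s4)) - ln (2*pi)/2
        - (ln (2 * sqrt (1/(2*pi*\<sigma>))) - w^2/(2*\<sigma>))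
      = - (X1 * h s1 + X2 * h s2 + X3 * h s3 + X4 * h s4)
        - (X1* s1 + X2* s2 + X3* s3 + X4* s4)
        + (X1* s1^3 + X2* s2^3 + X3* s3^3 + X4* s4^3)/6
        - (s1 + s2 + s3 + s4)/2
        - ((l1 - s1) + (l2 - s2) + (l3 - s3) + (l4 - s4))/2"
    unfolding I1 I2 I3 l1_def l2_def l3_def l4_def dec by (simp add: field_simps)
  note E0 = E0[unfolded I4]
  have s4e: "s1^4 = w^4/(16*X1^4)" "s2^4 = w^4/(16*X2^4)" "s3^4 = w^4/(16*X3^4)" "s4^4 = w^4/(16*X4^4)"
    unfolding s1_def s2_def s3_def s4_def by (simp_all add: power_divide power_mult_distrib)
  have s2e: "s1^2 = w^2/(4*X1^2)" "s2^2 = w^2/(4*X2^2)" "s3^2 = w^2/(4*X3^2)" "s4^2 = w^2/(4*X4^2)"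
    unfolding s1_def s2_def s3_def s4_def by (simp_all add: power_divide power_mult_distrib)
  have sh: "\<bar>s1\<bar> \<le> 1/2" "\<bar>s2\<bar> \<le> 1/2" "\<bar>s3\<bar> \<le> 1/2" "\<bar>s4\<bar> \<le> 1/2" using sb by auto
  have b1: "\<bar>X1 * h s1\<bar> \<le> 43 * (w^4/n^3)" "\<bar>X2 * h s2\<bar> \<le> 43 * (w^4/n^3)"
     "\<bar>X3 * h s3\<bar> \<le> 43 * (w^4/n^3)" "\<bar>X4 * h s4\<bar> \<le> 43 * (w^4/n^3)"
    unfolding h_def using Xh_bound[OF n] Xb s4e sh by auto
  have b2: "\<bar>X1* s1^3 + X2* s2^3 + X3* s3^3 + X4* s4^3\<bar> \<le> 1024 * (\<bar>w\<bar>^3/n^3)"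
  proof -
    have "\<bar>X1* s1^3 + X2* s2^3 + X3* s3^3 + X4* s4^3\<bar>
        = (\<bar>w\<bar>^3/8) * n^2 * \<bar>1/m^2 - 1/(n-m)^2\<bar> * \<bar>1/P^2 - 1/Q^2\<bar>"
      unfolding I5 by (simp add: abs_mult power_abs)
    also have "\<dots> \<le> (\<bar>w\<bar>^3/8) * n^2 * (256/n^3) * (32/n^2)"
      using bound_m(1)[OF n m1 m2 mn] bound_P(1)[OF n Pb Qb] n
      by (intro mult_mono mult_nonneg_nonneg) auto
    also have "\<dots> = 1024 * (\<bar>w\<bar>^3/n^3)" using n by (simp add: field_simps power2_eq_square power3_eq_cube)
    finally show ?thesis .
  qed
  have b3: "\<bar>s1 + s2 + s3 + s4\<bar> \<le> 1/n"
  proof -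
    have "\<bar>s1 + s2 + s3 + s4\<bar> = (\<bar>w\<bar>/2) * n * \<bar>1/m - 1/(n-m)\<bar> * \<bar>1/P - 1/Q\<bar>"
      unfolding I6 using n by (simp add: abs_mult)
    also have "\<dots> \<le> ((n/100)/2) * n * (16/n^2) * (8/n)"
      using bound_m(2)[OF n m1 m2 mn] bound_P(2)[OF n Pb Qb] wb n
      by (intro mult_mono mult_nonneg_nonneg) auto
    also have "\<dots> = (64/100) * (1/n)" using n by (simp add: field_simps power2_eq_square)
    also have "\<dots> \<le> 1 * (1/n)" using n by (intro mult_right_mono) auto
    finally show ?thesis by simp
  qed
  have b4: "\<bar>l1 - s1\<bar> \<le> 128 * (w^2/n^2)" "\<bar>l2 - s2\<bar> \<le> 128 * (w^2/n^2)"
     "\<bar>l3 - s3\<bar> \<le> 128 * (w^2/n^2)" "\<bar>l4 - s4\<bar> \<le> 128 * (w^2/n^2)"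
  proof -
    have "\<bar>ln (1+s) - s\<bar> \<le> 128 * (w^2/n^2)" if "\<bar>s\<bar> \<le> 1/2" "X \<ge> n/16" "s^2 = w^2/(4*X^2)" for s X
    proof -
      have "\<bar>ln (1+s) - s\<bar> \<le> 2 * s^2" by (rule abs_ln_one_plus_x_minus_x_bound[OF that(1)])
      also have "s^2 \<le> 64 * (w^2/n^2)" by (rule s2_bound[OF n that(2,3)])
      finally show ?thesis by simp
    qed
    then show "\<bar>l1 - s1\<bar> \<le> 128 * (w^2/n^2)" "\<bar>l2 - s2\<bar> \<le> 128 * (w^2/n^2)"
     "\<bar>l3 - s3\<bar> \<le> 128 * (w^2/n^2)" "\<bar>l4 - s4\<bar> \<le> 128 * (w^2/n^2)"
      unfolding l1_def l2_def l3_def l4_def using sh Xb s2e by auto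
  qed
  have c1: "\<bar>w\<bar>^3/n^3 \<le> 1/n + w^4/n^3" using w3_le n2 by simp
  have c2: "w^2/n^2 \<le> 1/n + w^4/n^3" using w2_le n by simp
  have c3: "0 \<le> w^4/n^3" "0 \<le> 1/n" using n by auto
  have "\<bar>FS m + FS (n-m) - FS n + FS P + FS Q - FS (X1*(1+s1)) - FS (X2*(1+s2))
        - FS (X3*(1+s3)) - FS (X4*(1+s4)) - ln (2*pi)/2
        - (ln (2 * sqrt (1/(2*pi*\<sigma>))) - w^2/(2*\<sigma>))\<bar> \<le> 600 * (1/n + w^4/n^3)"
    unfolding E0 by (rule final_lin[OF b1 b2 b3 b4 c1 c2 c3])
  then show "\<bar>FS m + FS (n-m) - FS n + FS P + FS Q - FS (m*P/n + w/2) - FS (m*Q/n - w/2)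
        - FS ((n-m)*P/n - w/2) - FS ((n-m)*Q/n + w/2) - ln (2*pi)/2
        - (ln (2 * sqrt (1/(2*pi*((m - m^2/n) * (1 - ((P - Q)/n)^2))))) - w^2/(2*((m - m^2/n) * (1 - ((P - Q)/n)^2))))\<bar>
      \<le> 600 * (1/n + w^4/n^3)"
    unfolding aeq \<sigma>_def .
qed



definition SS :: "nat \<Rightarrow> int list set" where
  "SS N = {xs. length xs = N \<and> set xs \<subseteq> {-1, 1}}"

definition AS :: "nat \<Rightarrow> int \<Rightarrow> int list set" where
  "AS N s = {xs \<in> SS N. sum_list xs = s}"

lemma SS_finite: "finite (SS N)"
proof -
  have "SS N = {xs. set xs \<subseteq> {-1,1} \<and> length xs = N}" unfolding SS_def by auto
  then show ?thesis using finite_lists_length_eq[of "{-1,1::int}" N] by simp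
qed

lemma SS_card: "card (SS N) = 2^N"
proof -
  have "SS N = {xs. set xs \<subseteq> {-1,1} \<and> length xs = N}" unfolding SS_def by auto
  then show ?thesis using card_lists_length_eq[of "{-1,1::int}" N] by (simp add: numeral_2_eq_2)
qed

lemma SS_ne: "SS N \<noteq> {}"
proof -
  have "replicate N 1 \<in> SS N" unfolding SS_def by auto
  then show ?thesis by blast
qed

lemma AS_finite: "finite (AS N s)"
  unfolding AS_def using SS_finite by simp

lemma SS_Suc: "SS (Suc N) = (\<lambda>xs. 1 # xs) ` SS N \<union> (\<lambda>xs. (-1) # xs) ` SS N"
proof (intro equalityI subsetI)
  fix xs assume "xs \<in> SS (Suc N)"
  then obtain y ys where xs: "xs = y # ys" "length ys = N" "y \<in> {-1,1}" "set ys \<subseteq> {-1,1}"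
    unfolding SS_def by (cases xs) auto
  then show "xs \<in> (\<lambda>xs. 1 # xs) ` SS N \<union> (\<lambda>xs. (-1) # xs) ` SS N"
    unfolding SS_def by auto
qed (auto simp: SS_def)

lemma AS_Suc: "AS (Suc N) s = (\<lambda>xs. 1 # xs) ` AS N (s - 1) \<union> (\<lambda>xs. (-1) # xs) ` AS N (s + 1)"
  unfolding AS_def SS_Suc by (auto simp: image_iff)

lemma AS_card_Suc: "card (AS (Suc N) s) = card (AS N (s - 1)) + card (AS N (s + 1))"
proof -
  have "card (AS (Suc N) s) = card ((\<lambda>xs. 1 # xs) ` AS N (s - 1)) + card ((\<lambda>xs. (-1) # xs) ` AS N (s + 1))"
    unfolding AS_Suc by (rule card_Un_disjoint) (auto simp: AS_finite)
  also have "\<dots> = card (AS N (s - 1)) + card (AS N (s + 1))"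
    by (simp add: card_image inj_on_def)
  finally show ?thesis .
qed

lemma AS_card: "card (AS N (2*j - int N)) = (if 0 \<le> j then N choose (nat j) else 0)"
proof (induction N arbitrary: j)
  case 0
  have "AS 0 s = (if s = 0 then {[]} else {})" for s unfolding AS_def SS_def by auto
  then show ?case by auto
next
  case (Suc N)
  have e1: "2*j - int (Suc N) - 1 = 2*(j-1) - int N" by simp
  have e2: "2*j - int (Suc N) + 1 = 2*j - int N" by simp
  have "card (AS (Suc N) (2*j - int (Suc N))) = card (AS N (2*(j-1) - int N)) + card (AS N (2*j - int N))"
    unfolding AS_card_Suc e1 e2 ..
  also have "\<dots> = (if 0 \<le> j - 1 then N choose (nat (j-1)) else 0) + (if 0 \<le> j then N choose (nat j) else 0)"
    by (simp only: Suc.IH)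
  also have "\<dots> = (if 0 \<le> j then Suc N choose (nat j) else 0)"
  proof (cases "j \<ge> 1")
    case True
    then have "nat j = Suc (nat (j-1))" by simp
    then show ?thesis using True by simp
  next
    case False
    then show ?thesis by (cases "j = 0") auto
  qed
  finally show ?case .
qed

lemma SS_sum: "xs \<in> SS N \<Longrightarrow> \<exists>j. 0 \<le> j \<and> j \<le> int N \<and> sum_list xs = 2*j - int N"
proof (induction xs arbitrary: N)
  case Nil
  then show ?case unfolding SS_def by auto
next
  case (Cons y ys)
  then obtain M where M: "N = Suc M" "ys \<in> SS M" "y \<in> {-1,1}" unfolding SS_def by (cases N) auto
  then obtain j where j: "0 \<le> j" "j \<le> int M" "sum_list ys = 2*j - int M" using Cons.IH by blast
  show ?case
  proof (cases "y = 1")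
    case True
    then show ?thesis using j M by (intro exI[of _ "j+1"]) auto
  next
    case False
    then have "y = -1" using M by auto
    then show ?thesis using j M by (intro exI[of _ "j"]) auto
  qed
qed

lemma AS_nonempty: "AS N s \<noteq> {} \<Longrightarrow> \<exists>j. 0 \<le> j \<and> j \<le> int N \<and> s = 2*j - int N"
  unfolding AS_def using SS_sum by blast

lemma joint_bij:
  assumes "m \<le> n"
  shows "card {xs \<in> SS n. sum_list (take m xs) = k \<and> sum_list xs = z} = card (AS m k) * card (AS (n-m) (z-k))"
proof -
  have "bij_betw (\<lambda>xs. (take m xs, drop m xs)) {xs \<in> SS n. sum_list (take m xs) = k \<and> sum_list xs = z}
          (AS m k \<times> AS (n-m) (z-k))"
  proof (rule bij_betwI[where g = "\<lambda>(u,v). u @ v"])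
    show "(\<lambda>xs. (take m xs, drop m xs)) \<in> {xs \<in> SS n. sum_list (take m xs) = k \<and> sum_list xs = z} \<rightarrow> AS m k \<times> AS (n-m) (z-k)"
    proof
      fix xs assume xs: "xs \<in> {xs \<in> SS n. sum_list (take m xs) = k \<and> sum_list xs = z}"
      then have "sum_list (take m xs) + sum_list (drop m xs) = z"
        by (metis (mono_tags, lifting) append_take_drop_id mem_Collect_eq sum_list_append)
      then show "(take m xs, drop m xs) \<in> AS m k \<times> AS (n-m) (z-k)"
        using xs assms unfolding AS_def SS_def by (auto dest: in_set_takeD in_set_dropD)
    qed
    show "(\<lambda>(u,v). u @ v) \<in> AS m k \<times> AS (n-m) (z-k) \<rightarrow> {xs \<in> SS n. sum_list (take m xs) = k \<and> sum_list xs = z}"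
      using assms unfolding AS_def SS_def by auto
  qed (auto simp: AS_def SS_def)
  then show ?thesis by (simp add: bij_betw_same_card card_cartesian_product)
qed



lemma prob_eq: "measure_pmf.prob (srw_steps N) A = card (SS N \<inter> A) / 2^N"
proof -
  have "srw_steps N = pmf_of_set (SS N)" unfolding srw_steps_def SS_def ..
  then show ?thesis using measure_pmf_of_set[OF SS_ne SS_finite] SS_card by simp
qed

lemma walk_pos_full: "xs \<in> SS n \<Longrightarrow> walk_pos n xs = sum_list xs"
  unfolding walk_pos_def SS_def by simp

lemma srw_prob_eq: "srw_prob n z = card (AS n z) / 2^n"
proof -
  have "SS n \<inter> {xs. walk_pos n xs = z} = AS n z"
    unfolding AS_def using walk_pos_full by auto
  then show ?thesis unfolding srw_prob_def prob_eq by simp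
qed

lemma L_char: "z \<in> L n \<Longrightarrow> \<exists>j. 0 \<le> j \<and> j \<le> int n \<and> z = 2*j - int n"
proof -
  assume "z \<in> L n"
  then have "srw_prob n z > 0" unfolding L_def by simp
  then have "card (AS n z) \<noteq> 0" unfolding srw_prob_eq by (cases "card (AS n z) = 0") auto
  then have "AS n z \<noteq> {}" by auto
  then show ?thesis by (rule AS_nonempty)
qed

lemma cond_eq:
  assumes "m \<le> n"
  shows "srw_cond_prob m (real_of_int k) n z = real (card (AS m k) * card (AS (n-m) (z-k))) / real (card (AS n z))"
proof -
  have e1: "SS n \<inter> {xs. real_of_int (walk_pos m xs) = real_of_int k \<and> walk_pos n xs = z}
      = {xs \<in> SS n. sum_list (take m xs) = k \<and> sum_list xs = z}"
    using walk_pos_full by (auto simp: walk_pos_def)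
  have e2: "SS n \<inter> {xs. walk_pos n xs = z} = AS n z"
    unfolding AS_def using walk_pos_full by auto
  show ?thesis unfolding srw_cond_prob_def prob_eq e1 e2 joint_bij[OF assms]
    by (simp add: divide_simps)
qed

lemma rem_bound:
  assumes "real N \<ge> x/32" "x > 0"
  shows "\<bar>dS N - DS\<bar> \<le> 16/x"
proof -
  have N1: "N \<ge> 1" using assms by (cases N) auto
  have "\<bar>dS N - DS\<bar> \<le> 1/(2 * real N)" by (rule dS_DS[OF N1])
  also have "\<dots> \<le> 1/(2*(x/32))" using assms by (intro recip_le) auto
  also have "\<dots> = 16/x" by simp
  finally show ?thesis .
qed

lemma ln_fact_FS: "ln (fact N) = FS (real N) + dS N"
  unfolding FS_def dS_def by simp

lemma ln_choose:
  assumes "k \<le> N"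
  shows "ln (real (N choose k)) = ln (fact N) - ln (fact k) - ln (fact (N - k))"
proof -
  have "real (N choose k) = fact N / (fact k * fact (N - k))" using binomial_fact[OF assms] by simp
  then show ?thesis by (simp add: ln_div ln_mult)
qed

lemma rearr:
  fixes f1 f2 f3 f4 f5 f6 f7 f8 f9 d1 d2 d3 d4 d5 d6 d7 d8 d9 :: real
  shows "(f1 + d1 - (f2 + d2) - (f3 + d3)) + (f4 + d4 - (f5 + d5) - (f6 + d6)) - (f7 + d7 - (f8 + d8) - (f9 + d9))
    = (f1 + f4 - f7 + f8 + f9 - f2 - f3 - f5 - f6) + (d1 + d4 - d7 + d8 + d9 - d2 - d3 - d5 - d6)"
  by (simp add: algebra_simps)

lemma comb_final:
  fixes Fs D T1 T2 x1 x2 x3 x4 x5 x6 x7 x8 x9 N W4 :: real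
  assumes B: "\<bar>Fs - D - (T1 - T2)\<bar> \<le> 600 * (N + W4)"
    and "\<bar>x1 - D\<bar> \<le> 16 * N" "\<bar>x2 - D\<bar> \<le> 16 * N" "\<bar>x3 - D\<bar> \<le> 16 * N"
    "\<bar>x4 - D\<bar> \<le> 16 * N" "\<bar>x5 - D\<bar> \<le> 16 * N" "\<bar>x6 - D\<bar> \<le> 16 * N"
    "\<bar>x7 - D\<bar> \<le> 16 * N" "\<bar>x8 - D\<bar> \<le> 16 * N" "\<bar>x9 - D\<bar> \<le> 16 * N"
    and "0 \<le> N" "0 \<le> W4"
  shows "\<bar>(Fs + (x1 + x2 - x3 + x4 + x5 - x6 - x7 - x8 - x9)) - T1 + T2\<bar> \<le> 800 * (N + W4)"
  using assms by argo

lemma main_case: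
  fixes n m :: nat and z :: int and w :: real
  assumes n2: "n \<ge> 2" and mn: "\<bar>2 * int m - int n\<bar> \<le> 1"
    and zb: "\<bar>real_of_int z\<bar> \<le> 1/100 * real n" and wb: "\<bar>w\<bar> \<le> 1/100 * real n"
    and zL: "z \<in> L n"
    and kex: "\<exists>k::int. real_of_int k = w + real m / real n * real_of_int z \<and> k \<in> L m"
  shows "let \<sigma> = (real m - real m ^ 2 / real n) * (1 - (real_of_int z / real n) ^ 2) in
      \<exists>E::real. \<bar>E\<bar> \<le> 800 * (1 / real n + w ^ 4 / real n ^ 3) \<and>
        srw_cond_prob m (real m / real n * real_of_int z + w) n z
          = 2 * sqrt (1 / (2 * pi * \<sigma>)) * exp (- (w ^ 2) / (2 * \<sigma>) + E)"
proof -
  obtain k where kw: "real_of_int k = w + real m / real n * real_of_int z" and kL: "k \<in> L m"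
    using kex by blast
  obtain jz where jz: "0 \<le> jz" "jz \<le> int n" "z = 2*jz - int n" using L_char[OF zL] by blast
  obtain ja where ja: "0 \<le> ja" "ja \<le> int m" "k = 2*ja - int m" using L_char[OF kL] by blast
  define K where "K = nat jz"
  define a where "a = nat ja"
  have K: "K \<le> n" "int K = jz" unfolding K_def using jz by auto
  have a: "a \<le> m" "int a = ja" unfolding a_def using ja by auto
  have zK: "real_of_int z = 2 * real K - real n"
  proof -
    have "real_of_int z = real_of_int (2 * int K - int n)" using jz(3) K(2) by simp
    then show ?thesis by simp
  qed
  have ka: "real_of_int k = 2 * real a - real m"
  proof -
    have "real_of_int k = real_of_int (2 * int a - int m)" using ja(3) a(2) by simp
    then show ?thesis by simp
  qed
  have h1: "2 * m \<le> n + 1" "n \<le> 2 * m + 1" using mn unfolding abs_le_iff by linarith+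
  have mlen: "m \<le> n" using h1 n2 by linarith
  have rh1: "2 * real m \<le> real n + 1" "real n \<le> 2 * real m + 1"
  proof -
    have "real (2 * m) \<le> real (n + 1)" "real n \<le> real (2 * m + 1)" using h1 by (simp_all only: of_nat_le_iff)
    then show "2 * real m \<le> real n + 1" "real n \<le> 2 * real m + 1" by simp_all
  qed
  have rn2: "real n \<ge> 2" using n2 by simp
  have np: "real n > 0" using n2 by simp
  have mnr: "\<bar>real n - 2 * real m\<bar> \<le> 1" using rh1 by (simp add: abs_le_iff)
  define P where "P = real K"
  define Q where "Q = real n - real K"
  have PQ: "P + Q = real n" unfolding P_def Q_def by simp
  have Pb: "P \<ge> real n / 4" and Qb: "Q \<ge> real n / 4"
  proof -
    have "\<bar>2 * real K - real n\<bar> \<le> real n / 100" using zK zb by simp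
    then have "2 * real K - real n \<le> real n / 100" "-(2 * real K - real n) \<le> real n / 100"
      unfolding abs_le_iff by auto
    then show "P \<ge> real n / 4" "Q \<ge> real n / 4" unfolding P_def Q_def using np by linarith+
  qed
  have wb': "\<bar>w\<bar> \<le> real n / 100" using wb by simp
  note AN = analytic[OF rn2 mnr PQ Pb Qb wb']
  have w_eq: "w = (2*real a - real m) - real m / real n * (2 * real K - real n)"
    using kw ka zK by simp
  have e1: "real m * P / real n + w/2 = real a"
    unfolding w_eq P_def using np by (simp add: field_simps)
  have e2: "real m * Q / real n - w/2 = real m - real a"
    unfolding w_eq Q_def using np by (simp add: field_simps)
  have e3: "(real n - real m) * P / real n - w/2 = real K - real a"
    unfolding w_eq P_def using np by (simp add: field_simps)
  have e4: "(real n - real m) * Q / real n + w/2 = real n - real m - real K + real a"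
    unfolding w_eq Q_def using np by (simp add: field_simps)
  have ge: "real a \<ge> real n/32" "real m - real a \<ge> real n/32" "real K - real a \<ge> real n/32"
     "real n - real m - real K + real a \<ge> real n/32"
    using AN(1-4) unfolding e1 e2 e3 e4 by auto
  have aK: "a < K" using ge(3) np by simp
  define b where "b = K - a"
  have rb: "real b = real K - real a" unfolding b_def using aK by simp
  have bnm: "b \<le> n - m" using ge(4) np mlen unfolding b_def by linarith
  have rma: "real (m - a) = real m - real a" using a(1) by simp
  have rnm: "real (n - m) = real n - real m" using mlen by simp
  have rnK: "real (n - K) = real n - real K" using K(1) by simp
  have rnmb: "real (n - m - b) = real n - real m - real K + real a" using bnm rnm rb by simp
  have arg: "real m / real n * real_of_int z + w = real_of_int k" using kw by simp
  have c1: "card (AS m k) = m choose a"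
    using AS_card[of m ja] ja a_def by simp
  have c2: "card (AS (n-m) (z-k)) = (n-m) choose b"
  proof -
    have "z - k = 2*(jz - ja) - int (n - m)" using jz(3) ja(3) mlen by simp
    moreover have "jz - ja = int b" unfolding b_def using K(2) a(2) aK by simp
    ultimately show ?thesis using AS_card[of "n-m" "jz - ja"] by simp
  qed
  have c3: "card (AS n z) = n choose K"
    using AS_card[of n jz] jz K_def by simp
  define Pc where "Pc = srw_cond_prob m (real m / real n * real_of_int z + w) n z"
  have Pc_eq: "Pc = real (m choose a) * real ((n-m) choose b) / real (n choose K)"
    unfolding Pc_def arg cond_eq[OF mlen] c1 c2 c3 by simp
  have bpos: "real (m choose a) > 0" "real ((n-m) choose b) > 0" "real (n choose K) > 0"
    using a(1) bnm K(1) by auto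
  have Pc_pos: "Pc > 0" unfolding Pc_eq using bpos by simp
  have lnPc: "ln Pc = (ln (fact m) - ln (fact a) - ln (fact (m - a)))
       + (ln (fact (n-m)) - ln (fact b) - ln (fact (n - m - b)))
       - (ln (fact n) - ln (fact K) - ln (fact (n - K)))"
  proof -
    have "ln Pc = ln (real (m choose a)) + ln (real ((n-m) choose b)) - ln (real (n choose K))"
      unfolding Pc_eq using bpos by (simp add: ln_mult ln_div)
    then show ?thesis unfolding ln_choose[OF a(1)] ln_choose[OF bnm] ln_choose[OF K(1)] .
  qed
  define \<sigma> where "\<sigma> = (real m - real m ^ 2 / real n) * (1 - (real_of_int z / real n) ^ 2)"
  have PQz: "(P - Q) / real n = real_of_int z / real n" unfolding P_def Q_def zK by simp
  have B: "\<bar>FS (real m) + FS (real n - real m) - FS (real n) + FS (real K) + FS (real n - real K)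
      - FS (real a) - FS (real m - real a) - FS (real K - real a) - FS (real n - real m - real K + real a)
      - ln (2*pi)/2 - (ln (2 * sqrt (1/(2*pi*\<sigma>))) - w^2/(2*\<sigma>))\<bar> \<le> 600 * (1/real n + w^4/real n^3)"
  proof -
    have "real n - real K = Q" unfolding Q_def ..
    note AN5 = AN(5)[unfolded e1 e2 e3 e4 PQz \<sigma>_def[symmetric]]
    show ?thesis using AN5 unfolding P_def Q_def .
  qed
  have L: "ln Pc = (FS (real m) + FS (real n - real m) - FS (real n) + FS (real K) + FS (real n - real K)
      - FS (real a) - FS (real m - real a) - FS (real K - real a) - FS (real n - real m - real K + real a))
      + (dS m + dS (n-m) - dS n + dS K + dS (n-K) - dS a - dS (m-a) - dS b - dS (n-m-b))"
    unfolding lnPc ln_fact_FS rma rnm rnK rb rnmb by (rule rearr)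
  have mq: "real m \<ge> real n / 4" "real n - real m \<ge> real n / 4" using rh1 rn2 by linarith+
  have r: "\<bar>dS m - DS\<bar> \<le> 16/real n" "\<bar>dS (n-m) - DS\<bar> \<le> 16/real n" "\<bar>dS n - DS\<bar> \<le> 16/real n"
     "\<bar>dS K - DS\<bar> \<le> 16/real n" "\<bar>dS (n-K) - DS\<bar> \<le> 16/real n" "\<bar>dS a - DS\<bar> \<le> 16/real n"
     "\<bar>dS (m-a) - DS\<bar> \<le> 16/real n" "\<bar>dS b - DS\<bar> \<le> 16/real n" "\<bar>dS (n-m-b) - DS\<bar> \<le> 16/real n"
  proof -
    have q: "real N \<ge> real n/32 \<Longrightarrow> \<bar>dS N - DS\<bar> \<le> 16/real n" for N using rem_bound np by blast
    have g: "real m \<ge> real n/32" "real (n-m) \<ge> real n/32" "real n \<ge> real n/32" "real K \<ge> real n/32"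
      "real (n-K) \<ge> real n/32" "real a \<ge> real n/32" "real (m-a) \<ge> real n/32" "real b \<ge> real n/32"
      "real (n-m-b) \<ge> real n/32"
      unfolding rma rnm rnK rb rnmb using mq ge np Pb Qb unfolding P_def Q_def by linarith+
    show "\<bar>dS m - DS\<bar> \<le> 16/real n" "\<bar>dS (n-m) - DS\<bar> \<le> 16/real n" "\<bar>dS n - DS\<bar> \<le> 16/real n"
     "\<bar>dS K - DS\<bar> \<le> 16/real n" "\<bar>dS (n-K) - DS\<bar> \<le> 16/real n" "\<bar>dS a - DS\<bar> \<le> 16/real n"
     "\<bar>dS (m-a) - DS\<bar> \<le> 16/real n" "\<bar>dS b - DS\<bar> \<le> 16/real n" "\<bar>dS (n-m-b) - DS\<bar> \<le> 16/real n"
      using q[OF g(1)] q[OF g(2)] q[OF g(3)] q[OF g(4)] q[OF g(5)] q[OF g(6)] q[OF g(7)] q[OF g(8)] q[OF g(9)] .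
  qed
  define E where "E = ln Pc - ln (2 * sqrt (1/(2*pi*\<sigma>))) + w^2/(2*\<sigma>)"
  have c3: "0 \<le> w^4/real n^3" "0 \<le> 1/real n" using np by auto
  have Eb: "\<bar>E\<bar> \<le> 800 * (1 / real n + w ^ 4 / real n ^ 3)"
  proof -
    have r16: "\<bar>dS N - DS\<bar> \<le> 16 * (1/real n)" if "\<bar>dS N - DS\<bar> \<le> 16/real n" for N using that by simp
    show ?thesis unfolding E_def L
      by (rule comb_final[OF B[folded DS_value] r16[OF r(1)] r16[OF r(2)] r16[OF r(3)] r16[OF r(4)]
            r16[OF r(5)] r16[OF r(6)] r16[OF r(7)] r16[OF r(8)] r16[OF r(9)] c3(2) c3(1)])
  qed
  have sig1: "real m - real m ^ 2 / real n > 0"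
  proof -
    have "real m - real m ^ 2 / real n = real m * (real n - real m) / real n"
      using np by (simp add: field_simps power2_eq_square)
    moreover have "real m > 0" "real n - real m > 0" using mq np by linarith+
    ultimately show ?thesis using np by simp
  qed
  have sig2: "1 - (real_of_int z / real n) ^ 2 > 0"
  proof -
    have "\<bar>real_of_int z / real n\<bar> \<le> 1/100" using zb np by (simp add: divide_le_eq abs_divide)
    then have "\<bar>real_of_int z / real n\<bar> < 1" by linarith
    then have "(real_of_int z / real n) ^ 2 < 1" by (simp only: abs_square_less_1)
    then show ?thesis by simp
  qed
  have sigp: "\<sigma> > 0" unfolding \<sigma>_def using sig1 sig2 by simp
  have ypos: "2 * sqrt (1/(2*pi*\<sigma>)) > 0" using sigp by simp
  have eq: "Pc = 2 * sqrt (1 / (2 * pi * \<sigma>)) * exp (- (w ^ 2) / (2 * \<sigma>) + E)"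
  proof -
    have "- (w ^ 2) / (2 * \<sigma>) + E = ln Pc - ln (2 * sqrt (1/(2*pi*\<sigma>)))" unfolding E_def by simp
    then have "exp (- (w ^ 2) / (2 * \<sigma>) + E) = Pc / (2 * sqrt (1/(2*pi*\<sigma>)))"
      using Pc_pos ypos by (simp add: exp_diff)
    then have "2 * sqrt (1 / (2 * pi * \<sigma>)) * exp (- (w ^ 2) / (2 * \<sigma>) + E)
        = 2 * sqrt (1 / (2 * pi * \<sigma>)) * (Pc / (2 * sqrt (1/(2*pi*\<sigma>))))" by simp
    also have "\<dots> = Pc"
    proof -
      have yne: "2 * sqrt (1/(2*pi*\<sigma>)) \<noteq> 0" using ypos by linarith
      have gen: "y * (x / y) = x" if "y \<noteq> 0" for x y :: real using that by simp
      show ?thesis by (rule gen[OF yne])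
    qed
    finally show ?thesis by simp
  qed
  show ?thesis unfolding Let_def \<sigma>_def[symmetric] Pc_def[symmetric]
    using Eb eq by blast
qed


theorem lemma7:
  shows "\<exists>c::real. c > 0 \<and> (\<exists>C::real. \<forall>(n::nat) (m::nat) (z::int) (w::real).
     n \<ge> 2 \<longrightarrow> \<bar>2 * int m - int n\<bar> \<le> 1 \<longrightarrow>
     \<bar>real_of_int z\<bar> \<le> c * real n \<longrightarrow> \<bar>w\<bar> \<le> c * real n \<longrightarrow>
     z \<in> L n \<longrightarrow>
     (\<exists>k::int. real_of_int k = w + real m / real n * real_of_int z \<and> k \<in> L m) \<longrightarrow>
     (let \<sigma> = (real m - real m ^ 2 / real n) * (1 - (real_of_int z / real n) ^ 2) in
      \<exists>E::real. \<bar>E\<bar> \<le> C * (1 / real n + w ^ 4 / real n ^ 3) \<and>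
        srw_cond_prob m (real m / real n * real_of_int z + w) n z
          = 2 * sqrt (1 / (2 * pi * \<sigma>)) * exp (- (w ^ 2) / (2 * \<sigma>) + E)))"
  proof (rule exI[of _ "1/100"], intro conjI)
  show "(1/100::real) > 0" by simp
next
  show "\<exists>C::real. \<forall>(n::nat) (m::nat) (z::int) (w::real).
     n \<ge> 2 \<longrightarrow> \<bar>2 * int m - int n\<bar> \<le> 1 \<longrightarrow>
     \<bar>real_of_int z\<bar> \<le> 1/100 * real n \<longrightarrow> \<bar>w\<bar> \<le> 1/100 * real n \<longrightarrow>
     z \<in> L n \<longrightarrow>
     (\<exists>k::int. real_of_int k = w + real m / real n * real_of_int z \<and> k \<in> L m) \<longrightarrow>
     (let \<sigma> = (real m - real m ^ 2 / real n) * (1 - (real_of_int z / real n) ^ 2) in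
      \<exists>E::real. \<bar>E\<bar> \<le> C * (1 / real n + w ^ 4 / real n ^ 3) \<and>
        srw_cond_prob m (real m / real n * real_of_int z + w) n z
          = 2 * sqrt (1 / (2 * pi * \<sigma>)) * exp (- (w ^ 2) / (2 * \<sigma>) + E))"
    apply (rule exI[of _ 800])
    apply (intro allI impI)
    by (rule main_case)
qed

end
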